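(* Let $v$ be a quadratic Hamiltonian vector field on $\mathbb{C}^2$ with four distinct non-degenerate singular points $p_1,\dots,p_4$. Assume its spectrum is not exceptional, i.e. $\det Dv(p_j)+\det Dv(p_k)\neq0$ for all $j\ne k$. Then $v$ has exactly one twin vector field among all quadratic vector fields, and this twin is $-v$.
   Context: A quadratic vector field is $v=P\,\partial_x+Q\,\partial_y$ with $\deg P,\deg Q\le2$, and it is Hamiltonian if $P_x+Q_y\equiv0$. $Dv$ is the Jacobian matrix of $(P,Q)$. A singular point $p$ is non-degenerate if $\det Dv(p)\ne0$. Two vector fields $v_1,v_2$ with isolated singularities are twin vector fields if $v_1\ne v_2$, they have the same singular set, and at each common singular point $p$ the matrices $Dv_1(p)$ and $Dv_2(p)$ have the same trace and the same determinant. *)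

theory Defs
  imports "HOL-Analysis.Analysis"
begin

type_synonym vf = "complex \<times> complex \<Rightarrow> complex \<times> complex"

definition quad_poly :: "(complex \<times> complex \<Rightarrow> complex) \<Rightarrow> bool" where
  "quad_poly f \<longleftrightarrow> (\<exists>a b c d e g. \<forall>x y.
      f (x, y) = a + b * x + c * y + d * x\<^sup>2 + e * x * y + g * y\<^sup>2)"

definition quadratic_vf :: "vf \<Rightarrow> bool" where
  "quadratic_vf v \<longleftrightarrow> quad_poly (\<lambda>z. fst (v z)) \<and> quad_poly (\<lambda>z. snd (v z))"

definition d_x :: "(complex \<times> complex \<Rightarrow> complex) \<Rightarrow> complex \<times> complex \<Rightarrow> complex" where
  "d_x f p = deriv (\<lambda>x. f (x, snd p)) (fst p)"

definition d_y :: "(complex \<times> complex \<Rightarrow> complex) \<Rightarrow> complex \<times> complex \<Rightarrow> complex" where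
  "d_y f p = deriv (\<lambda>y. f (fst p, y)) (snd p)"

definition vP :: "vf \<Rightarrow> complex \<times> complex \<Rightarrow> complex" where
  "vP v = (\<lambda>z. fst (v z))"

definition vQ :: "vf \<Rightarrow> complex \<times> complex \<Rightarrow> complex" where
  "vQ v = (\<lambda>z. snd (v z))"

definition hamiltonian :: "vf \<Rightarrow> bool" where
  "hamiltonian v \<longleftrightarrow> (\<forall>p. d_x (vP v) p + d_y (vQ v) p = 0)"

definition tr_D :: "vf \<Rightarrow> complex \<times> complex \<Rightarrow> complex" where
  "tr_D v p = d_x (vP v) p + d_y (vQ v) p"

definition det_D :: "vf \<Rightarrow> complex \<times> complex \<Rightarrow> complex" where
  "det_D v p = d_x (vP v) p * d_y (vQ v) p - d_y (vP v) p * d_x (vQ v) p"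

definition sing :: "vf \<Rightarrow> (complex \<times> complex) set" where
  "sing v = {p. v p = (0, 0)}"

definition isolated_sing :: "vf \<Rightarrow> bool" where
  "isolated_sing v \<longleftrightarrow> (\<forall>p \<in> sing v. \<not> p islimpt sing v)"

definition twins :: "vf \<Rightarrow> vf \<Rightarrow> bool" where
  "twins v1 v2 \<longleftrightarrow> isolated_sing v1 \<and> isolated_sing v2 \<and> v1 \<noteq> v2 \<and>
     sing v1 = sing v2 \<and>
     (\<forall>p \<in> sing v1. tr_D v1 p = tr_D v2 p \<and> det_D v1 p = det_D v2 p)"

end

theory Submission imports Defs begin

lemma dx_formula:
  assumes "\<forall>x y. f (x,y) = a + b*x + c*y + d*x\<^sup>2 + e*x*y + g*y\<^sup>2"
  shows "d_x f (x0,y0) = b + 2*d*x0 + e*y0"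
proof -
  have eq: "(\<lambda>x. f (x,y0)) = (\<lambda>x. a + b*x + c*y0 + d*x\<^sup>2 + e*x*y0 + g*y0\<^sup>2)"
    using assms by auto
  have "((\<lambda>x. a + b*x + c*y0 + d*x\<^sup>2 + e*x*y0 + g*y0\<^sup>2) has_field_derivative (b + 2*d*x0 + e*y0)) (at x0)"
    by (auto intro!: derivative_eq_intros simp: algebra_simps)
  then show ?thesis unfolding d_x_def by (simp add: eq DERIV_imp_deriv)
qed

lemma dy_formula:
  assumes "\<forall>x y. f (x,y) = a + b*x + c*y + d*x\<^sup>2 + e*x*y + g*y\<^sup>2"
  shows "d_y f (x0,y0) = c + e*x0 + 2*g*y0"
proof -
  have eq: "(\<lambda>y. f (x0,y)) = (\<lambda>y. a + b*x0 + c*y + d*x0\<^sup>2 + e*x0*y + g*y\<^sup>2)"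
    using assms by auto
  have "((\<lambda>y. a + b*x0 + c*y + d*x0\<^sup>2 + e*x0*y + g*y\<^sup>2) has_field_derivative (c + e*x0 + 2*g*y0)) (at y0)"
    by (auto intro!: derivative_eq_intros simp: algebra_simps)
  then show ?thesis unfolding d_y_def by (simp add: eq DERIV_imp_deriv)
qed

lemma quad_zero:
  fixes a b c d e g :: complex
  assumes "\<forall>x y. a + b*x + c*y + d*x\<^sup>2 + e*x*y + g*y\<^sup>2 = 0"
  shows "a=0 \<and> b=0 \<and> c=0 \<and> d=0 \<and> e=0 \<and> g=0"
proof -
  have h1: "a = 0" using assms[rule_format, of 0 0] by simp
  have h2: "a + b + d = 0" using assms[rule_format, of 1 0] by simp
  have h3: "a - b + d = 0" using assms[rule_format, of "-1" 0] by simp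
  have h4: "a + c + g = 0" using assms[rule_format, of 0 1] by simp
  have h5: "a - c + g = 0" using assms[rule_format, of 0 "-1"] by simp
  have h6: "a + b + c + d + e + g = 0" using assms[rule_format, of 1 1] by simp
  have "2*b = (a+b+d) - (a-b+d)" by simp
  then have b: "b = 0" using h2 h3 by simp
  have "2*c = (a+c+g) - (a-c+g)" by simp
  then have c: "c = 0" using h4 h5 by simp
  have d: "d = 0" using h1 h2 b by simp
  have g: "g = 0" using h1 h4 c by simp
  show ?thesis using h1 b c d g h6 by simp
qed


lemma quad_affine:
  fixes f :: "complex \<times> complex \<Rightarrow> complex"
  assumes "\<forall>x y. f (x,y) = a + b*x + c*y + d*x\<^sup>2 + e*x*y + g*y\<^sup>2"
  shows "f (x1 + u*XA + w*XB, y1 + u*YA + w*YB) = f (x1,y1)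
     + (b*XA + c*YA + 2*d*x1*XA + e*(x1*YA + y1*XA) + 2*g*y1*YA)*u
     + (b*XB + c*YB + 2*d*x1*XB + e*(x1*YB + y1*XB) + 2*g*y1*YB)*w
     + (d*XA\<^sup>2 + e*XA*YA + g*YA\<^sup>2)*u\<^sup>2
     + (2*d*XA*XB + e*(XA*YB+XB*YA) + 2*g*YA*YB)*u*w
     + (d*XB\<^sup>2 + e*XB*YB + g*YB\<^sup>2)*w\<^sup>2"
  unfolding assms[rule_format] by algebra

lemma coord_solve:
  fixes x y x1 y1 X1 Y1 X2 Y2 :: complex
  assumes "X1*Y2 - X2*Y1 \<noteq> 0"
  shows "x = x1 + ((x-x1)*Y2 - (y-y1)*X2)/(X1*Y2 - X2*Y1) * X1 + (X1*(y-y1) - Y1*(x-x1))/(X1*Y2 - X2*Y1) * X2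
       \<and> y = y1 + ((x-x1)*Y2 - (y-y1)*X2)/(X1*Y2 - X2*Y1) * Y1 + (X1*(y-y1) - Y1*(x-x1))/(X1*Y2 - X2*Y1) * Y2"
proof -
  define D where "D = X1*Y2 - X2*Y1"
  have D: "D \<noteq> 0" using assms D_def by simp
  have 1: "((x-x1)*Y2 - (y-y1)*X2)/D * X1 + (X1*(y-y1) - Y1*(x-x1))/D * X2
     = (((x-x1)*Y2 - (y-y1)*X2) * X1 + (X1*(y-y1) - Y1*(x-x1)) * X2) / D"
    by (simp add: add_divide_distrib)
  have 2: "((x-x1)*Y2 - (y-y1)*X2) * X1 + (X1*(y-y1) - Y1*(x-x1)) * X2 = (x - x1) * D"
    unfolding D_def by algebra
  have 3: "((x-x1)*Y2 - (y-y1)*X2)/D * Y1 + (X1*(y-y1) - Y1*(x-x1))/D * Y2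
     = (((x-x1)*Y2 - (y-y1)*X2) * Y1 + (X1*(y-y1) - Y1*(x-x1)) * Y2) / D"
    by (simp add: add_divide_distrib)
  have 4: "((x-x1)*Y2 - (y-y1)*X2) * Y1 + (X1*(y-y1) - Y1*(x-x1)) * Y2 = (y - y1) * D"
    unfolding D_def by algebra
  have e1: "((x-x1)*Y2 - (y-y1)*X2)/D * X1 + (X1*(y-y1) - Y1*(x-x1))/D * X2 = x - x1"
    using 1 2 D by simp
  have e2: "((x-x1)*Y2 - (y-y1)*X2)/D * Y1 + (X1*(y-y1) - Y1*(x-x1))/D * Y2 = y - y1"
    using 3 4 D by simp
  show ?thesis unfolding D_def[symmetric] by (simp only: add.assoc e1 e2) simp
qed

lemma mid_det:
  fixes x1 y1 x2 y2 :: complex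
  assumes P: "\<forall>x y. fp (x,y) = a1 + b1*x + c1*y + d1*x\<^sup>2 + e1*x*y + g1*y\<^sup>2"
    and Q: "\<forall>x y. fq (x,y) = a2 + b2*x + c2*y + d2*x\<^sup>2 + e2*x*y + g2*y\<^sup>2"
    and z: "fp (x1,y1) = 0" "fp (x2,y2) = 0" "fq (x1,y1) = 0" "fq (x2,y2) = 0"
    and ne: "(x1,y1) \<noteq> (x2,y2)"
  shows "((b1 + 2*d1*x1 + e1*y1) + (b1 + 2*d1*x2 + e1*y2)) * ((c2 + e2*x1 + 2*g2*y1) + (c2 + e2*x2 + 2*g2*y2))
       - ((c1 + e1*x1 + 2*g1*y1) + (c1 + e1*x2 + 2*g1*y2)) * ((b2 + 2*d2*x1 + e2*y1) + (b2 + 2*d2*x2 + e2*y2)) = 0"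
proof -
  define u where "u = (b1 + 2*d1*x1 + e1*y1) + (b1 + 2*d1*x2 + e1*y2)"
  define w where "w = (c1 + e1*x1 + 2*g1*y1) + (c1 + e1*x2 + 2*g1*y2)"
  define u' where "u' = (b2 + 2*d2*x1 + e2*y1) + (b2 + 2*d2*x2 + e2*y2)"
  define w' where "w' = (c2 + e2*x1 + 2*g2*y1) + (c2 + e2*x2 + 2*g2*y2)"
  have e1: "u*(x2-x1) + w*(y2-y1) = 2*(fp (x2,y2) - fp (x1,y1))"
    unfolding u_def w_def by (simp add: P power2_eq_square algebra_simps)
  have e2: "u'*(x2-x1) + w'*(y2-y1) = 2*(fq (x2,y2) - fq (x1,y1))"
    unfolding u'_def w'_def by (simp add: Q power2_eq_square algebra_simps)
  have E1: "u*(x2-x1) + w*(y2-y1) = 0" using e1 z by simp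
  have E2: "u'*(x2-x1) + w'*(y2-y1) = 0" using e2 z by simp
  have "(u*w' - w*u')*(x2-x1) = w'*(u*(x2-x1) + w*(y2-y1)) - w*(u'*(x2-x1) + w'*(y2-y1))"
    by (simp add: algebra_simps)
  then have hx: "(u*w' - w*u')*(x2-x1) = 0" using E1 E2 by simp
  have "(u*w' - w*u')*(y2-y1) = u*(u'*(x2-x1) + w'*(y2-y1)) - u'*(u*(x2-x1) + w*(y2-y1))"
    by (simp add: algebra_simps)
  then have hy: "(u*w' - w*u')*(y2-y1) = 0" using E1 E2 by simp
  from ne have "x2 - x1 \<noteq> 0 \<or> y2 - y1 \<noteq> 0" by auto
  then have "u*w' - w*u' = 0" using hx hy by auto
  then show ?thesis unfolding u_def w_def u'_def w'_def by simp
qed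

lemma final_alg:
  fixes a1 b1 c1 a2 b2 c2 a3 b3 c3 m11 m12 m21 m22 :: complex
  assumes h12: "(a1+a2)*(-(a1+a2)) - (b1+b2)*(c1+c2) = 0"
    and h13: "(a1+a3)*(-(a1+a3)) - (b1+b3)*(c1+c3) = 0"
    and h23: "(a2+a3)*(-(a2+a3)) - (b2+b3)*(c2+c3) = 0"
    and nz: "((a1*(-a1) - b1*c1) + (a2*(-a2) - b2*c2)) * ((a1*(-a1) - b1*c1) + (a3*(-a3) - b3*c3))
            * ((a2*(-a2) - b2*c2) + (a3*(-a3) - b3*c3)) \<noteq> 0"
    and t1: "(m11*a1 + m12*c1) + (m21*b1 + m22*(-a1)) = 0"
    and t2: "(m11*a2 + m12*c2) + (m21*b2 + m22*(-a2)) = 0"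
    and t3: "(m11*a3 + m12*c3) + (m21*b3 + m22*(-a3)) = 0"
  shows "m12 = 0 \<and> m21 = 0 \<and> m11 = m22"
proof -
  define K where "K = a1*(b2*c3 - b3*c2) - b1*(a2*c3 - a3*c2) + c1*(a2*b3 - a3*b2)"
  define D1 where "D1 = a1*(-a1) - b1*c1"
  define D2 where "D2 = a2*(-a2) - b2*c2"
  define D3 where "D3 = a3*(-a3) - b3*c3"
  define G12 where "G12 = -(2*a1*a2 + b1*c2 + c1*b2)"
  define G13 where "G13 = -(2*a1*a3 + b1*c3 + c1*b3)"
  define G23 where "G23 = -(2*a2*a3 + b2*c3 + c2*b3)"
  have id1: "2*K^2 = (2*D1)*((2*D2)*(2*D3) - G23*G23) - G12*(G12*(2*D3) - G23*G13) + G13*(G12*G23 - (2*D2)*G13)"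
    unfolding K_def D1_def D2_def D3_def G12_def G13_def G23_def by (simp add: algebra_simps power2_eq_square)
  have "G12 + (D1+D2) = (a1+a2)*(-(a1+a2)) - (b1+b2)*(c1+c2)" unfolding G12_def D1_def D2_def by (simp add: algebra_simps)
  then have g12: "G12 = -(D1+D2)" using h12 by (simp add: add_eq_0_iff2 eq_neg_iff_add_eq_0)
  have "G13 + (D1+D3) = (a1+a3)*(-(a1+a3)) - (b1+b3)*(c1+c3)" unfolding G13_def D1_def D3_def by (simp add: algebra_simps)
  then have g13: "G13 = -(D1+D3)" using h13 by (simp add: add_eq_0_iff2 eq_neg_iff_add_eq_0)
  have "G23 + (D2+D3) = (a2+a3)*(-(a2+a3)) - (b2+b3)*(c2+c3)" unfolding G23_def D2_def D3_def by (simp add: algebra_simps)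
  then have g23: "G23 = -(D2+D3)" using h23 by (simp add: add_eq_0_iff2 eq_neg_iff_add_eq_0)
  have "2*K^2 = -4*((D1+D2)*(D1+D3)*(D2+D3))"
    unfolding id1 g12 g13 g23 by (simp add: algebra_simps power2_eq_square)
  moreover have "(D1+D2)*(D1+D3)*(D2+D3) \<noteq> 0" using nz unfolding D1_def D2_def D3_def .
  ultimately have K: "K \<noteq> 0" by auto
  define E1 where "E1 = (m11*a1 + m12*c1) + (m21*b1 + m22*(-a1))"
  define E2 where "E2 = (m11*a2 + m12*c2) + (m21*b2 + m22*(-a2))"
  define E3 where "E3 = (m11*a3 + m12*c3) + (m21*b3 + m22*(-a3))"
  have "K*(m11-m22) = (b2*c3-b3*c2)*E1 - (b1*c3-b3*c1)*E2 + (b1*c2-b2*c1)*E3"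
    unfolding K_def E1_def E2_def E3_def by (simp add: algebra_simps)
  then have "K*(m11-m22) = 0" using t1 t2 t3 unfolding E1_def E2_def E3_def by simp
  moreover have "K*m21 = -(a2*c3-a3*c2)*E1 + (a1*c3-a3*c1)*E2 - (a1*c2-a2*c1)*E3"
    unfolding K_def E1_def E2_def E3_def by (simp add: algebra_simps)
  then have "K*m21 = 0" using t1 t2 t3 unfolding E1_def E2_def E3_def by simp
  moreover have "K*m12 = (a2*b3-a3*b2)*E1 - (a1*b3-a3*b1)*E2 + (a1*b2-a2*b1)*E3"
    unfolding K_def E1_def E2_def E3_def by (simp add: algebra_simps)
  then have "K*m12 = 0" using t1 t2 t3 unfolding E1_def E2_def E3_def by simp
  ultimately show ?thesis using K by auto
qed

lemma Zraw:
  fixes f :: "complex \<times> complex \<Rightarrow> complex" and x1 y1 x2 y2 x3 y3 x4 y4 x y :: complex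
  assumes F: "\<forall>x y. f (x,y) = a + b*x + c*y + d*x\<^sup>2 + e*x*y + g*y\<^sup>2"
    and z1: "f (x1,y1) = 0" and z2: "f (x2,y2) = 0" and z3: "f (x3,y3) = 0" and z4: "f (x4,y4) = 0"
    and z5: "f ((x1+x2)/2, (y1+y2)/2) = 0" and z6: "f ((x1+x3)/2, (y1+y3)/2) = 0"
    and nc: "(x2-x1)*(y3-y1) - (x3-x1)*(y2-y1) \<noteq> 0"
    and ns: "(x4-x1)*(y3-y1) - (x3-x1)*(y4-y1) \<noteq> 0"
    and nt: "(x2-x1)*(y4-y1) - (x4-x1)*(y2-y1) \<noteq> 0"
  shows "f (x,y) = 0"
proof -
  define X1 where "X1 = x2 - x1"
  define Y1 where "Y1 = y2 - y1"
  define X2 where "X2 = x3 - x1"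
  define Y2 where "Y2 = y3 - y1"
  define B where "B = b*X1 + c*Y1 + 2*d*x1*X1 + e*(x1*Y1 + y1*X1) + 2*g*y1*Y1"
  define C where "C = b*X2 + c*Y2 + 2*d*x1*X2 + e*(x1*Y2 + y1*X2) + 2*g*y1*Y2"
  define Dd where "Dd = d*X1\<^sup>2 + e*X1*Y1 + g*Y1\<^sup>2"
  define E where "E = 2*d*X1*X2 + e*(X1*Y2+X2*Y1) + 2*g*Y1*Y2"
  define G where "G = d*X2\<^sup>2 + e*X2*Y2 + g*Y2\<^sup>2"
  have aff: "\<And>u w. f (x1 + u*X1 + w*X2, y1 + u*Y1 + w*Y2) = B*u + C*w + Dd*u\<^sup>2 + E*u*w + G*w\<^sup>2"
    using quad_affine[OF F] z1 unfolding B_def C_def Dd_def E_def G_def by simp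
  have Del: "X1*Y2 - X2*Y1 \<noteq> 0" using nc unfolding X1_def X2_def Y1_def Y2_def by simp
  have "f (x2,y2) = f (x1 + 1*X1 + 0*X2, y1 + 1*Y1 + 0*Y2)" by (simp add: X1_def Y1_def)
  then have e2: "B + Dd = 0" using z2 aff[of 1 0] by simp
  have "f ((x1+x2)/2, (y1+y2)/2) = f (x1 + (1/2)*X1 + 0*X2, y1 + (1/2)*Y1 + 0*Y2)"
    by (simp add: X1_def Y1_def field_simps)
  then have e5: "B*(1/2) + Dd*(1/2)\<^sup>2 = 0" using z5 aff[of "1/2" 0] by simp
  have "Dd = -4*(B*(1/2) + Dd*(1/2)\<^sup>2) + 2*(B + Dd)" by (simp add: algebra_simps power2_eq_square)
  note h = this
  have Dd0: "Dd = 0" using h[unfolded e2 e5] by simp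
  then have B0: "B = 0" using e2 by simp
  have "f (x3,y3) = f (x1 + 0*X1 + 1*X2, y1 + 0*Y1 + 1*Y2)" by (simp add: X2_def Y2_def)
  then have e3: "C + G = 0" using z3 aff[of 0 1] by simp
  have "f ((x1+x3)/2, (y1+y3)/2) = f (x1 + 0*X1 + (1/2)*X2, y1 + 0*Y1 + (1/2)*Y2)"
    by (simp add: X2_def Y2_def field_simps)
  then have e6: "C*(1/2) + G*(1/2)\<^sup>2 = 0" using z6 aff[of 0 "1/2"] by simp
  have "G = -4*(C*(1/2) + G*(1/2)\<^sup>2) + 2*(C + G)" by (simp add: algebra_simps power2_eq_square)
  note h = this
  have G0: "G = 0" using h[unfolded e3 e6] by simp
  then have C0: "C = 0" using e3 by simp
  define sA where "sA = ((x4-x1)*Y2 - (y4-y1)*X2)/(X1*Y2 - X2*Y1)"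
  define tA where "tA = (X1*(y4-y1) - Y1*(x4-x1))/(X1*Y2 - X2*Y1)"
  have cs4: "x4 = x1 + sA*X1 + tA*X2 \<and> y4 = y1 + sA*Y1 + tA*Y2"
    using coord_solve[OF Del, of x4 x1 y4 y1] unfolding sA_def tA_def by simp
  have "E* sA*tA = 0" using aff[of sA tA] cs4 z4 B0 C0 Dd0 G0 by simp
  moreover have "sA \<noteq> 0" unfolding sA_def using Del ns unfolding X1_def X2_def Y1_def Y2_def by (simp add: mult.commute)
  moreover have "tA \<noteq> 0" unfolding tA_def using Del nt unfolding X1_def X2_def Y1_def Y2_def by (simp add: mult.commute)
  ultimately have E0: "E = 0" by simp
  define u0 where "u0 = ((x-x1)*Y2 - (y-y1)*X2)/(X1*Y2 - X2*Y1)"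
  define w0 where "w0 = (X1*(y-y1) - Y1*(x-x1))/(X1*Y2 - X2*Y1)"
  have cs: "x = x1 + u0*X1 + w0*X2 \<and> y = y1 + u0*Y1 + w0*Y2"
    using coord_solve[OF Del, of x x1 y y1] unfolding u0_def w0_def by simp
  show ?thesis using aff[of u0 w0] cs B0 C0 Dd0 G0 E0 by simp
qed

lemma line_zero:
  fixes f :: "complex \<times> complex \<Rightarrow> complex" and x1 y1 X1 Y1 \<tau> t :: complex
  assumes F: "\<forall>x y. f (x,y) = a + b*x + c*y + d*x\<^sup>2 + e*x*y + g*y\<^sup>2"
    and z1: "f (x1,y1) = 0" and z2: "f (x1 + X1, y1 + Y1) = 0"
    and z3: "f (x1 + \<tau>*X1, y1 + \<tau>*Y1) = 0" and t0: "\<tau> \<noteq> 0" and t1: "\<tau> \<noteq> 1"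
  shows "f (x1 + t*X1, y1 + t*Y1) = 0"
proof -
  define B where "B = b*X1 + c*Y1 + 2*d*x1*X1 + e*(x1*Y1 + y1*X1) + 2*g*y1*Y1"
  define Dd where "Dd = d*X1\<^sup>2 + e*X1*Y1 + g*Y1\<^sup>2"
  have aff: "\<And>u. f (x1 + u*X1, y1 + u*Y1) = B*u + Dd*u\<^sup>2"
    using quad_affine[OF F, where XB=0 and YB=0 and w=0] z1 unfolding B_def Dd_def by simp
  have e2: "B + Dd = 0" using aff[of 1] z2 by simp
  have e3: "B*\<tau> + Dd*\<tau>\<^sup>2 = 0" using aff[of \<tau>] z3 by simp
  have "Dd*(\<tau>*(\<tau> - 1)) = B*\<tau> + Dd*\<tau>\<^sup>2 - \<tau>*(B + Dd)" by (simp add: algebra_simps power2_eq_square)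
  then have "Dd*(\<tau>*(\<tau> - 1)) = 0" using e2 e3 by simp
  then have Dd0: "Dd = 0" using t0 t1 by simp
  then have "B = 0" using e2 by simp
  then show ?thesis using aff[of t] Dd0 by simp
qed


lemma finite_isolated: "finite (sing v) \<Longrightarrow> isolated_sing v"
  unfolding isolated_sing_def islimpt_eq_infinite_ball
  by (meson finite_Int zero_less_one)

lemma coeffs_of:
  assumes "quadratic_vf v"
  obtains a1 b1 c1 d1 e1 g1 a2 b2 c2 d2 e2 g2 where
    "\<forall>x y. fst (v (x,y)) = a1 + b1*x + c1*y + d1*x\<^sup>2 + e1*x*y + g1*y\<^sup>2"
    "\<forall>x y. snd (v (x,y)) = a2 + b2*x + c2*y + d2*x\<^sup>2 + e2*x*y + g2*y\<^sup>2"
proof -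
  have "\<exists>a1 b1 c1 d1 e1 g1. \<forall>x y. fst (v (x,y)) = a1 + b1*x + c1*y + d1*x\<^sup>2 + e1*x*y + g1*y\<^sup>2"
    using assms unfolding quadratic_vf_def quad_poly_def by simp
  then obtain a1 b1 c1 d1 e1 g1 where h1: "\<forall>x y. fst (v (x,y)) = a1 + b1*x + c1*y + d1*x\<^sup>2 + e1*x*y + g1*y\<^sup>2"
    by blast
  have "\<exists>a2 b2 c2 d2 e2 g2. \<forall>x y. snd (v (x,y)) = a2 + b2*x + c2*y + d2*x\<^sup>2 + e2*x*y + g2*y\<^sup>2"
    using assms unfolding quadratic_vf_def quad_poly_def by simp
  then obtain a2 b2 c2 d2 e2 g2 where h2: "\<forall>x y. snd (v (x,y)) = a2 + b2*x + c2*y + d2*x\<^sup>2 + e2*x*y + g2*y\<^sup>2"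
    by blast
  show thesis by (rule that[OF h1 h2])
qed

lemma Dv_formulas:
  assumes hP: "\<forall>x y. fst (v (x,y)) = a1 + b1*x + c1*y + d1*x\<^sup>2 + e1*x*y + g1*y\<^sup>2"
    and hQ: "\<forall>x y. snd (v (x,y)) = a2 + b2*x + c2*y + d2*x\<^sup>2 + e2*x*y + g2*y\<^sup>2"
  shows "d_x (vP v) (x,y) = b1 + 2*d1*x + e1*y" "d_y (vP v) (x,y) = c1 + e1*x + 2*g1*y"
    "d_x (vQ v) (x,y) = b2 + 2*d2*x + e2*y" "d_y (vQ v) (x,y) = c2 + e2*x + 2*g2*y"
proof -
  have P: "\<forall>x y. vP v (x,y) = a1 + b1*x + c1*y + d1*x\<^sup>2 + e1*x*y + g1*y\<^sup>2" using hP by (simp add: vP_def)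
  have Q: "\<forall>x y. vQ v (x,y) = a2 + b2*x + c2*y + d2*x\<^sup>2 + e2*x*y + g2*y\<^sup>2" using hQ by (simp add: vQ_def)
  show "d_x (vP v) (x,y) = b1 + 2*d1*x + e1*y" by (rule dx_formula[OF P])
  show "d_y (vP v) (x,y) = c1 + e1*x + 2*g1*y" by (rule dy_formula[OF P])
  show "d_x (vQ v) (x,y) = b2 + 2*d2*x + e2*y" by (rule dx_formula[OF Q])
  show "d_y (vQ v) (x,y) = c2 + e2*x + 2*g2*y" by (rule dy_formula[OF Q])
qed

lemma noncol:
  assumes qv: "quadratic_vf v" and fin: "finite (sing v)"
    and ps: "p \<in> sing v" and qs: "q \<in> sing v" and rs: "r \<in> sing v"
    and pq: "p \<noteq> q" and pr: "p \<noteq> r" and qr: "q \<noteq> r"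
  shows "(fst q - fst p)*(snd r - snd p) - (fst r - fst p)*(snd q - snd p) \<noteq> 0"
proof
  assume det: "(fst q - fst p)*(snd r - snd p) - (fst r - fst p)*(snd q - snd p) = 0"
  obtain a1 b1 c1 d1 e1 g1 a2 b2 c2 d2 e2 g2 where
    hP: "\<forall>x y. fst (v (x,y)) = a1 + b1*x + c1*y + d1*x\<^sup>2 + e1*x*y + g1*y\<^sup>2" and
    hQ: "\<forall>x y. snd (v (x,y)) = a2 + b2*x + c2*y + d2*x\<^sup>2 + e2*x*y + g2*y\<^sup>2"
    using coeffs_of[OF qv] by blast
  define X1 where "X1 = fst q - fst p"
  define Y1 where "Y1 = snd q - snd p"
  have XY: "X1 \<noteq> 0 \<or> Y1 \<noteq> 0" using pq unfolding X1_def Y1_def by (auto simp: prod_eq_iff)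
  obtain \<tau> where tr: "fst r = fst p + \<tau>*X1" "snd r = snd p + \<tau>*Y1"
  proof (cases "X1 = 0")
    case True
    then have Y: "Y1 \<noteq> 0" using XY by simp
    have "fst r = fst p" using det True Y unfolding X1_def Y1_def by simp
    then show ?thesis using that[of "(snd r - snd p)/Y1"] True Y by simp
  next
    case False
    have "X1*(snd r - snd p) = (fst r - fst p)*Y1" using det unfolding X1_def Y1_def by simp
    then have "snd r - snd p = (fst r - fst p)/X1 * Y1" using False by (simp add: field_simps)
    then have e: "snd r = snd p + (fst r - fst p)/X1 * Y1" by (metis add.commute diff_add_cancel)
    show ?thesis by (rule that[of "(fst r - fst p)/X1"]) (use False e in simp_all)
  qed
  have t0: "\<tau> \<noteq> 0" using tr pr by (auto simp: prod_eq_iff)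
  have t1: "\<tau> \<noteq> 1" using tr qr unfolding X1_def Y1_def by (auto simp: prod_eq_iff)
  have vz: "\<And>z. z \<in> sing v \<Longrightarrow> fst (v (fst z, snd z)) = 0 \<and> snd (v (fst z, snd z)) = 0"
    unfolding sing_def by auto
  have q': "fst q = fst p + X1" "snd q = snd p + Y1" unfolding X1_def Y1_def by simp_all
  have L: "v (fst p + t*X1, snd p + t*Y1) = (0,0)" for t
  proof -
    have "fst (v (fst p + t*X1, snd p + t*Y1)) = 0"
      using line_zero[where f="\<lambda>z. fst (v z)", OF hP, of "fst p" "snd p" X1 Y1 \<tau> t]
        vz[OF ps] vz[OF qs] vz[OF rs] q' tr t0 t1 by simp
    moreover have "snd (v (fst p + t*X1, snd p + t*Y1)) = 0"
      using line_zero[where f="\<lambda>z. snd (v z)", OF hQ, of "fst p" "snd p" X1 Y1 \<tau> t]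
        vz[OF ps] vz[OF qs] vz[OF rs] q' tr t0 t1 by simp
    ultimately show ?thesis by (simp add: prod_eq_iff)
  qed
  define h where "h = (\<lambda>t::complex. (fst p + t*X1, snd p + t*Y1))"
  have "inj h" unfolding h_def inj_def using XY by auto
  moreover have "range h \<subseteq> sing v" using L unfolding h_def sing_def by auto
  then have "finite (range h)" using fin finite_subset by blast
  ultimately have "finite (UNIV :: complex set)" using finite_imageD by blast
  then show False using infinite_UNIV_char_0 by blast
qed


lemma span_lemma:
  fixes x1 y1 x2 y2 x3 y3 x4 y4 :: complex and R :: "complex \<times> complex \<Rightarrow> complex"
  assumes hP: "\<forall>x y. fst (v (x,y)) = a1 + b1*x + c1*y + d1*x\<^sup>2 + e1*x*y + g1*y\<^sup>2"
    and hQ: "\<forall>x y. snd (v (x,y)) = a2 + b2*x + c2*y + d2*x\<^sup>2 + e2*x*y + g2*y\<^sup>2"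
    and hR: "\<forall>x y. R (x,y) = a3 + b3*x + c3*y + d3*x\<^sup>2 + e3*x*y + g3*y\<^sup>2"
    and v1: "v (x1,y1) = (0,0)" and v2: "v (x2,y2) = (0,0)" and v3: "v (x3,y3) = (0,0)" and v4: "v (x4,y4) = (0,0)"
    and R1: "R (x1,y1) = 0" and R2: "R (x2,y2) = 0" and R3: "R (x3,y3) = 0" and R4: "R (x4,y4) = 0"
    and nc: "(x2-x1)*(y3-y1) - (x3-x1)*(y2-y1) \<noteq> 0"
    and ns: "(x4-x1)*(y3-y1) - (x3-x1)*(y4-y1) \<noteq> 0"
    and nt: "(x2-x1)*(y4-y1) - (x4-x1)*(y2-y1) \<noteq> 0"
    and nd: "(b1 + 2*d1*x1 + e1*y1)*(c2 + e2*x1 + 2*g2*y1) - (c1 + e1*x1 + 2*g1*y1)*(b2 + 2*d2*x1 + e2*y1) \<noteq> 0"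
  shows "\<exists>\<alpha> \<beta>. \<forall>z. R z = \<alpha> * fst (v z) + \<beta> * snd (v z)"
proof -
  define m12 where "m12 = ((x1+x2)/2, (y1+y2)/2)"
  define m13 where "m13 = ((x1+x3)/2, (y1+y3)/2)"
  have vz: "fst (v (x1,y1)) = 0" "snd (v (x1,y1)) = 0" "fst (v (x2,y2)) = 0" "snd (v (x2,y2)) = 0"
    "fst (v (x3,y3)) = 0" "snd (v (x3,y3)) = 0" "fst (v (x4,y4)) = 0" "snd (v (x4,y4)) = 0"
    using v1 v2 v3 v4 by simp_all
  have dep: False if ab: "(\<alpha>,\<beta>) \<noteq> (0,0)" and z12: "\<alpha> * fst (v m12) + \<beta> * snd (v m12) = 0"
      and z13: "\<alpha> * fst (v m13) + \<beta> * snd (v m13) = 0" for \<alpha> \<beta>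
  proof -
    define F where "F = (\<lambda>z. \<alpha> * fst (v z) + \<beta> * snd (v z))"
    have hF: "\<forall>x y. F (x,y) = (\<alpha>*a1+\<beta>*a2) + (\<alpha>*b1+\<beta>*b2)*x + (\<alpha>*c1+\<beta>*c2)*y + (\<alpha>*d1+\<beta>*d2)*x\<^sup>2
        + (\<alpha>*e1+\<beta>*e2)*x*y + (\<alpha>*g1+\<beta>*g2)*y\<^sup>2"
      unfolding F_def using hP hQ by (simp add: algebra_simps)
    have Fz: "F (x,y) = 0" for x y
      by (rule Zraw[OF hF, of x1 y1 x2 y2 x3 y3 x4 y4])
        (use vz z12 z13 nc ns nt in \<open>simp_all add: F_def m12_def m13_def\<close>)
    have "\<forall>x y. (\<alpha>*a1+\<beta>*a2) + (\<alpha>*b1+\<beta>*b2)*x + (\<alpha>*c1+\<beta>*c2)*y + (\<alpha>*d1+\<beta>*d2)*x\<^sup>2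
        + (\<alpha>*e1+\<beta>*e2)*x*y + (\<alpha>*g1+\<beta>*g2)*y\<^sup>2 = 0" using Fz hF by metis
    from quad_zero[OF this] have c: "\<alpha>*b1+\<beta>*b2 = 0" "\<alpha>*c1+\<beta>*c2 = 0" "\<alpha>*d1+\<beta>*d2 = 0"
      "\<alpha>*e1+\<beta>*e2 = 0" "\<alpha>*g1+\<beta>*g2 = 0" by auto
    define Px where "Px = b1 + 2*d1*x1 + e1*y1"
    define Py where "Py = c1 + e1*x1 + 2*g1*y1"
    define Qx where "Qx = b2 + 2*d2*x1 + e2*y1"
    define Qy where "Qy = c2 + e2*x1 + 2*g2*y1"
    have "\<alpha>*Px + \<beta>*Qx = (\<alpha>*b1+\<beta>*b2) + 2*x1*(\<alpha>*d1+\<beta>*d2) + y1*(\<alpha>*e1+\<beta>*e2)"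
      unfolding Px_def Qx_def by (simp add: algebra_simps)
    then have r1: "\<alpha>*Px + \<beta>*Qx = 0" using c by simp
    have "\<alpha>*Py + \<beta>*Qy = (\<alpha>*c1+\<beta>*c2) + x1*(\<alpha>*e1+\<beta>*e2) + 2*y1*(\<alpha>*g1+\<beta>*g2)"
      unfolding Py_def Qy_def by (simp add: algebra_simps)
    then have r2: "\<alpha>*Py + \<beta>*Qy = 0" using c by simp
    have D: "Px*Qy - Py*Qx \<noteq> 0" using nd unfolding Px_def Py_def Qx_def Qy_def .
    have "\<alpha>*(Px*Qy - Py*Qx) = Qy*(\<alpha>*Px + \<beta>*Qx) - Qx*(\<alpha>*Py + \<beta>*Qy)" by (simp add: algebra_simps)
    then have "\<alpha> = 0" using r1 r2 D by simp
    moreover have "\<beta>*(Px*Qy - Py*Qx) = Px*(\<alpha>*Py + \<beta>*Qy) - Py*(\<alpha>*Px + \<beta>*Qx)" by (simp add: algebra_simps)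
    then have "\<beta> = 0" using r1 r2 D by simp
    ultimately show False using ab by simp
  qed
  define P12 where "P12 = fst (v m12)"
  define Q12 where "Q12 = snd (v m12)"
  define P13 where "P13 = fst (v m13)"
  define Q13 where "Q13 = snd (v m13)"
  define \<Delta> where "\<Delta> = P12*Q13 - P13*Q12"
  have "\<Delta> \<noteq> 0"
  proof
    assume \<Delta>0: "\<Delta> = 0"
    show False
    proof (cases "(P12, Q12) = (0,0)")
      case False
      show False by (rule dep[of Q12 "-P12"]) (use False \<Delta>0 in \<open>auto simp: prod_eq_iff P12_def Q12_def P13_def Q13_def \<Delta>_def algebra_simps\<close>)
    next
      case T1: True
      show False
      proof (cases "(P13, Q13) = (0,0)")
        case False
        show False by (rule dep[of Q13 "-P13"]) (use T1 False in \<open>auto simp: prod_eq_iff P12_def Q12_def P13_def Q13_def algebra_simps\<close>)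
      next
        case True
        show False by (rule dep[of 1 0]) (use T1 True in \<open>auto simp: prod_eq_iff P12_def Q12_def P13_def Q13_def\<close>)
      qed
    qed
  qed
  note D = this
  define R12 where "R12 = R m12"
  define R13 where "R13 = R m13"
  define \<alpha> where "\<alpha> = (R12*Q13 - R13*Q12)/\<Delta>"
  define \<beta> where "\<beta> = (P12*R13 - P13*R12)/\<Delta>"
  have n12: "(R12*Q13 - R13*Q12)*P12 + (P12*R13 - P13*R12)*Q12 = R12*\<Delta>"
    unfolding \<Delta>_def by (simp add: algebra_simps)
  have n13: "(R12*Q13 - R13*Q12)*P13 + (P12*R13 - P13*R12)*Q13 = R13*\<Delta>"
    unfolding \<Delta>_def by (simp add: algebra_simps)
  have s12: "\<alpha>*P12 + \<beta>*Q12 = R12"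
  proof -
    have "\<alpha>*P12 + \<beta>*Q12 = ((R12*Q13 - R13*Q12)*P12 + (P12*R13 - P13*R12)*Q12)/\<Delta>"
      unfolding \<alpha>_def \<beta>_def by (simp add: add_divide_distrib)
    then show ?thesis using n12 D by simp
  qed
  have s13: "\<alpha>*P13 + \<beta>*Q13 = R13"
  proof -
    have "\<alpha>*P13 + \<beta>*Q13 = ((R12*Q13 - R13*Q12)*P13 + (P12*R13 - P13*R12)*Q13)/\<Delta>"
      unfolding \<alpha>_def \<beta>_def by (simp add: add_divide_distrib)
    then show ?thesis using n13 D by simp
  qed
  define F where "F = (\<lambda>z. R z - \<alpha> * fst (v z) - \<beta> * snd (v z))"
  have hF: "\<forall>x y. F (x,y) = (a3 - \<alpha>*a1 - \<beta>*a2) + (b3 - \<alpha>*b1 - \<beta>*b2)*x + (c3 - \<alpha>*c1 - \<beta>*c2)*y + (d3 - \<alpha>*d1 - \<beta>*d2)*x\<^sup>2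
        + (e3 - \<alpha>*e1 - \<beta>*e2)*x*y + (g3 - \<alpha>*g1 - \<beta>*g2)*y\<^sup>2"
    unfolding F_def using hP hQ hR by (simp add: algebra_simps)
  have f12: "F ((x1+x2)/2, (y1+y2)/2) = 0" using s12 unfolding F_def m12_def[symmetric] P12_def Q12_def R12_def
    by (metis diff_diff_eq diff_self)
  have f13: "F ((x1+x3)/2, (y1+y3)/2) = 0" using s13 unfolding F_def m13_def[symmetric] P13_def Q13_def R13_def
    by (metis diff_diff_eq diff_self)
  have fz: "F (x1,y1) = 0" "F (x2,y2) = 0" "F (x3,y3) = 0" "F (x4,y4) = 0"
    using vz R1 R2 R3 R4 unfolding F_def by simp_all
  have "F (x,y) = 0" for x y
    by (rule Zraw[OF hF fz f12 f13 nc ns nt])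
  then have "R (x,y) = \<alpha> * fst (v (x,y)) + \<beta> * snd (v (x,y))" for x y
    unfolding F_def by (metis diff_diff_eq eq_iff_diff_eq_0)
  then have "\<forall>z. R z = \<alpha> * fst (v z) + \<beta> * snd (v z)" by (metis prod.collapse)
  then show ?thesis by blast
qed


theorem theorem5p1:
  fixes v :: vf and p :: "nat \<Rightarrow> complex \<times> complex"
  assumes "quadratic_vf v" and "hamiltonian v"
    and "sing v = {p 1, p 2, p 3, p 4}"
    and "\<forall>j\<in>{1..4}. \<forall>k\<in>{1..4}. j \<noteq> k \<longrightarrow> p j \<noteq> p k"
    and "\<forall>j\<in>{1..4}. det_D v (p j) \<noteq> 0"
    and "\<forall>j\<in>{1..4}. \<forall>k\<in>{1..4}. j \<noteq> k \<longrightarrow> det_D v (p j) + det_D v (p k) \<noteq> 0"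
  shows "{w. quadratic_vf w \<and> twins v w} = {(\<lambda>z. - v z)}"
proof -
  obtain a1 b1 c1 d1 e1 g1 a2 b2 c2 d2 e2 g2 where
    hP: "\<forall>x y. fst (v (x,y)) = a1 + b1*x + c1*y + d1*x\<^sup>2 + e1*x*y + g1*y\<^sup>2" and
    hQ: "\<forall>x y. snd (v (x,y)) = a2 + b2*x + c2*y + d2*x\<^sup>2 + e2*x*y + g2*y\<^sup>2"
    using coeffs_of[OF assms(1)] by blast
  note Fv = Dv_formulas[OF hP hQ]
  define A where "A = (\<lambda>z::complex\<times>complex. b1 + 2*d1* fst z + e1* snd z)"
  define B where "B = (\<lambda>z::complex\<times>complex. c1 + e1* fst z + 2*g1* snd z)"
  define C where "C = (\<lambda>z::complex\<times>complex. b2 + 2*d2* fst z + e2* snd z)"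
  have ham: "d_x (vP v) z + d_y (vQ v) z = 0" for z using assms(2) unfolding hamiltonian_def by blast
  have qyrel: "c2 + e2*x + 2*g2*y = -(b1 + 2*d1*x + e1*y)" for x y
    using ham[of "(x,y)"] Fv(1)[of x y] Fv(4)[of x y] by (simp add: add_eq_0_iff2 eq_neg_iff_add_eq_0)
  have dv: "d_x (vP v) z = A z" "d_y (vP v) z = B z" "d_x (vQ v) z = C z" "d_y (vQ v) z = - A z" for z
    using Fv[of "fst z" "snd z"] qyrel[of "fst z" "snd z"] unfolding A_def B_def C_def by simp_all
  have detv: "det_D v z = A z * (- A z) - B z * C z" for z
    unfolding det_D_def dv by simp
  have trv: "tr_D v z = 0" for z unfolding tr_D_def dv by simp
  have fin: "finite (sing v)" using assms(3) by simp
  have ps: "p 1 \<in> sing v" "p 2 \<in> sing v" "p 3 \<in> sing v" "p 4 \<in> sing v" using assms(3) by auto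
  have dist0: "\<And>j k. j\<in>{1..4} \<Longrightarrow> k\<in>{1..4} \<Longrightarrow> j \<noteq> k \<Longrightarrow> p j \<noteq> p k" using assms(4) by blast
  have d12: "p 1 \<noteq> p 2" by (rule dist0) auto
  have d13: "p 1 \<noteq> p 3" by (rule dist0) auto
  have d14: "p 1 \<noteq> p 4" by (rule dist0) auto
  have d23: "p 2 \<noteq> p 3" by (rule dist0) auto
  have d24: "p 2 \<noteq> p 4" by (rule dist0) auto
  have d34: "p 3 \<noteq> p 4" by (rule dist0) auto
  have nc: "(fst (p 2) - fst (p 1))*(snd (p 3) - snd (p 1)) - (fst (p 3) - fst (p 1))*(snd (p 2) - snd (p 1)) \<noteq> 0"
    by (rule noncol[OF assms(1) fin ps(1) ps(2) ps(3) d12 d13 d23])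
  have ns: "(fst (p 4) - fst (p 1))*(snd (p 3) - snd (p 1)) - (fst (p 3) - fst (p 1))*(snd (p 4) - snd (p 1)) \<noteq> 0"
    by (rule noncol[OF assms(1) fin ps(1) ps(4) ps(3) d14 d13]) (use d34 in auto)
  have nt: "(fst (p 2) - fst (p 1))*(snd (p 4) - snd (p 1)) - (fst (p 4) - fst (p 1))*(snd (p 2) - snd (p 1)) \<noteq> 0"
    by (rule noncol[OF assms(1) fin ps(1) ps(2) ps(4) d12 d14 d24])
  have nd0: "det_D v (p 1) \<noteq> 0" using assms(5) by auto
  have nd: "(b1 + 2*d1* fst (p 1) + e1* snd (p 1))*(c2 + e2* fst (p 1) + 2*g2* snd (p 1))
      - (c1 + e1* fst (p 1) + 2*g1* snd (p 1))*(b2 + 2*d2* fst (p 1) + e2* snd (p 1)) \<noteq> 0"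
    using nd0 unfolding det_D_def using Fv[of "fst (p 1)" "snd (p 1)"] by simp
  have vz: "v (fst (p j), snd (p j)) = (0,0)" if "p j \<in> sing v" for j
    using that unfolding sing_def by simp
  have inf: "infinite (UNIV :: (complex \<times> complex) set)"
  proof
    assume "finite (UNIV :: (complex \<times> complex) set)"
    then have "finite (fst ` (UNIV :: (complex \<times> complex) set))" by (rule finite_imageI)
    moreover have "fst ` (UNIV :: (complex \<times> complex) set) = UNIV" by (metis fst_conv surj_def)
    ultimately show False using infinite_UNIV_char_0[where 'a=complex] by simp
  qed
  have mem: "quadratic_vf (\<lambda>z. - v z) \<and> twins v (\<lambda>z. - v z)"
  proof
    have hP': "\<forall>x y. fst (- v (x,y)) = (-a1) + (-b1)*x + (-c1)*y + (-d1)*x\<^sup>2 + (-e1)*x*y + (-g1)*y\<^sup>2"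
      using hP by simp
    have hQ': "\<forall>x y. snd (- v (x,y)) = (-a2) + (-b2)*x + (-c2)*y + (-d2)*x\<^sup>2 + (-e2)*x*y + (-g2)*y\<^sup>2"
      using hQ by simp
    show "quadratic_vf (\<lambda>z. - v z)" unfolding quadratic_vf_def quad_poly_def
      using hP' hQ' by blast
    note Fm = Dv_formulas[where v="\<lambda>z. - v z", OF hP' hQ']
    have sm: "sing (\<lambda>z. - v z) = sing v" unfolding sing_def by (auto simp: prod_eq_iff)
    have ne: "v \<noteq> (\<lambda>z. - v z)"
    proof
      assume "v = (\<lambda>z. - v z)"
      then have "v z = - v z" for z by metis
      note e = this
      have "fst (v z) = 0 \<and> snd (v z) = 0" for z
        using arg_cong[OF e[of z], of fst] arg_cong[OF e[of z], of snd] by simp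
      then have "v z = (0,0)" for z by (simp add: prod_eq_iff)
      then have "sing v = UNIV" unfolding sing_def by auto
      then show False using fin inf by simp
    qed
    have "tr_D (\<lambda>z. - v z) z = tr_D v z \<and> det_D (\<lambda>z. - v z) z = det_D v z" for z
    proof -
      obtain x y where z: "z = (x,y)" by (cases z)
      show ?thesis unfolding z tr_D_def det_D_def Fm Fv using qyrel[of x y]
        by (simp add: algebra_simps)
    qed
    then show "twins v (\<lambda>z. - v z)" unfolding twins_def
      using finite_isolated[OF fin] finite_isolated[of "\<lambda>z. - v z"] fin sm ne by auto
  qed
  have uniq: "w = (\<lambda>z. - v z)" if qw: "quadratic_vf w" and tw: "twins v w" for w
  proof -
    have sw: "sing w = sing v" and nvw: "v \<noteq> w"
      and cond: "\<And>z. z \<in> sing v \<Longrightarrow> tr_D v z = tr_D w z \<and> det_D v z = det_D w z"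
      using tw unfolding twins_def by auto
    have wz: "w (fst (p j), snd (p j)) = (0,0)" if "p j \<in> sing v" for j
      using that sw unfolding sing_def by auto
    obtain a3 b3 c3 d3 e3 g3 a4 b4 c4 d4 e4 g4 where
      hW1: "\<forall>x y. fst (w (x,y)) = a3 + b3*x + c3*y + d3*x\<^sup>2 + e3*x*y + g3*y\<^sup>2" and
      hW2: "\<forall>x y. snd (w (x,y)) = a4 + b4*x + c4*y + d4*x\<^sup>2 + e4*x*y + g4*y\<^sup>2"
      using coeffs_of[OF qw] by blast
    obtain \<alpha>1 \<beta>1 where sp1: "\<forall>z. fst (w z) = \<alpha>1 * fst (v z) + \<beta>1 * snd (v z)"
      using span_lemma[where R="\<lambda>z. fst (w z)", OF hP hQ hW1 vz[OF ps(1)] vz[OF ps(2)] vz[OF ps(3)] vz[OF ps(4)]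
          _ _ _ _ nc ns nt nd] wz[OF ps(1)] wz[OF ps(2)] wz[OF ps(3)] wz[OF ps(4)] by auto
    obtain \<alpha>2 \<beta>2 where sp2: "\<forall>z. snd (w z) = \<alpha>2 * fst (v z) + \<beta>2 * snd (v z)"
      using span_lemma[where R="\<lambda>z. snd (w z)", OF hP hQ hW2 vz[OF ps(1)] vz[OF ps(2)] vz[OF ps(3)] vz[OF ps(4)]
          _ _ _ _ nc ns nt nd] wz[OF ps(1)] wz[OF ps(2)] wz[OF ps(3)] wz[OF ps(4)] by auto
    have hw1: "\<forall>x y. fst (w (x,y)) = (\<alpha>1*a1+\<beta>1*a2) + (\<alpha>1*b1+\<beta>1*b2)*x + (\<alpha>1*c1+\<beta>1*c2)*y
        + (\<alpha>1*d1+\<beta>1*d2)*x\<^sup>2 + (\<alpha>1*e1+\<beta>1*e2)*x*y + (\<alpha>1*g1+\<beta>1*g2)*y\<^sup>2"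
      using sp1 hP hQ by (simp add: algebra_simps)
    have hw2: "\<forall>x y. snd (w (x,y)) = (\<alpha>2*a1+\<beta>2*a2) + (\<alpha>2*b1+\<beta>2*b2)*x + (\<alpha>2*c1+\<beta>2*c2)*y
        + (\<alpha>2*d1+\<beta>2*d2)*x\<^sup>2 + (\<alpha>2*e1+\<beta>2*e2)*x*y + (\<alpha>2*g1+\<beta>2*g2)*y\<^sup>2"
      using sp2 hP hQ by (simp add: algebra_simps)
    note Fw = Dv_formulas[OF hw1 hw2]
    have dw: "d_x (vP w) z = \<alpha>1*A z + \<beta>1*C z" "d_y (vP w) z = \<alpha>1*B z + \<beta>1*(- A z)"
      "d_x (vQ w) z = \<alpha>2*A z + \<beta>2*C z" "d_y (vQ w) z = \<alpha>2*B z + \<beta>2*(- A z)" for z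
    proof -
      obtain x y where z: "z = (x,y)" by (cases z)
      have q: "- A z = c2 + e2*x + 2*g2*y" using qyrel[of x y] unfolding A_def z by simp
      show "d_x (vP w) z = \<alpha>1*A z + \<beta>1*C z" unfolding z Fw A_def C_def by (simp add: algebra_simps)
      show "d_x (vQ w) z = \<alpha>2*A z + \<beta>2*C z" unfolding z Fw A_def C_def by (simp add: algebra_simps)
      show "d_y (vP w) z = \<alpha>1*B z + \<beta>1*(- A z)" unfolding q unfolding z Fw B_def by (simp add: algebra_simps)
      show "d_y (vQ w) z = \<alpha>2*B z + \<beta>2*(- A z)" unfolding q unfolding z Fw B_def by (simp add: algebra_simps)
    qed
    have tj: "(\<alpha>1*A (p j) + \<beta>1*C (p j)) + (\<alpha>2*B (p j) + \<beta>2*(- A (p j))) = 0" if "p j \<in> sing v" for j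
      using cond[OF that] trv[of "p j"] unfolding tr_D_def dw by simp
    have hm: "(A (p j) + A (p k))*(-(A (p j) + A (p k))) - (B (p j) + B (p k))*(C (p j) + C (p k)) = 0"
      if "p j \<in> sing v" "p k \<in> sing v" "p j \<noteq> p k" for j k
    proof -
      have M: "((b1 + 2*d1* fst (p j) + e1* snd (p j)) + (b1 + 2*d1* fst (p k) + e1* snd (p k))) * ((c2 + e2* fst (p j) + 2*g2* snd (p j)) + (c2 + e2* fst (p k) + 2*g2* snd (p k)))
       - ((c1 + e1* fst (p j) + 2*g1* snd (p j)) + (c1 + e1* fst (p k) + 2*g1* snd (p k))) * ((b2 + 2*d2* fst (p j) + e2* snd (p j)) + (b2 + 2*d2* fst (p k) + e2* snd (p k))) = 0"
        by (rule mid_det[where fp="\<lambda>z. fst (v z)" and fq="\<lambda>z. snd (v z)", OF hP hQ])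
          (use vz[OF that(1)] vz[OF that(2)] that(3) in \<open>auto simp: prod_eq_iff\<close>)
      have q: "-(A (p j) + A (p k)) = (c2 + e2 * fst (p j) + 2*g2 * snd (p j)) + (c2 + e2 * fst (p k) + 2*g2 * snd (p k))"
        using qyrel[of "fst (p j)" "snd (p j)"] qyrel[of "fst (p k)" "snd (p k)"] unfolding A_def by simp
      show ?thesis unfolding q using M by (simp only: A_def B_def C_def)
    qed
    have dj: "det_D v (p j) = A (p j) * (- A (p j)) - B (p j) * C (p j)" for j by (rule detv)
    have nz0: "\<And>j k. j\<in>{1..4} \<Longrightarrow> k\<in>{1..4} \<Longrightarrow> j \<noteq> k \<Longrightarrow> det_D v (p j) + det_D v (p k) \<noteq> 0"
      using assms(6) by blast
    have n12: "det_D v (p 1) + det_D v (p 2) \<noteq> 0" by (rule nz0) auto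
    have n13: "det_D v (p 1) + det_D v (p 3) \<noteq> 0" by (rule nz0) auto
    have n23: "det_D v (p 2) + det_D v (p 3) \<noteq> 0" by (rule nz0) auto
    have nz: "((A (p 1) * (- A (p 1)) - B (p 1) * C (p 1)) + (A (p 2) * (- A (p 2)) - B (p 2) * C (p 2)))
        * ((A (p 1) * (- A (p 1)) - B (p 1) * C (p 1)) + (A (p 3) * (- A (p 3)) - B (p 3) * C (p 3)))
        * ((A (p 2) * (- A (p 2)) - B (p 2) * C (p 2)) + (A (p 3) * (- A (p 3)) - B (p 3) * C (p 3))) \<noteq> 0"
      using n12 n13 n23 unfolding dj by simp
    have fa: "\<beta>1 = 0 \<and> \<alpha>2 = 0 \<and> \<alpha>1 = \<beta>2"
      by (rule final_alg[OF hm[OF ps(1) ps(2) d12] hm[OF ps(1) ps(3) d13] hm[OF ps(2) ps(3) d23] nz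
            tj[OF ps(1)] tj[OF ps(2)] tj[OF ps(3)]])
    have "det_D v (p 1) = det_D w (p 1)" using cond[OF ps(1)] by simp
    then have "A (p 1) * (- A (p 1)) - B (p 1) * C (p 1) = (\<alpha>1*A (p 1))*(\<alpha>1*(- A (p 1))) - (\<alpha>1*B (p 1))*(\<alpha>1*C (p 1))"
      unfolding det_D_def dw dv using fa by simp
    then have "(\<alpha>1*\<alpha>1 - 1) * det_D v (p 1) = 0" unfolding dj by (simp add: algebra_simps)
    then have "\<alpha>1*\<alpha>1 = 1" using nd0 by simp
    then have a1: "\<alpha>1 = 1 \<or> \<alpha>1 = -1"
      by (metis (no_types, lifting) power2_eq_1_iff power2_eq_square)
    have wform: "w z = (\<alpha>1 * fst (v z), \<alpha>1 * snd (v z))" for z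
      using sp1[rule_format, of z] sp2[rule_format, of z] fa by (simp add: prod_eq_iff)
    show ?thesis
    proof (cases "\<alpha>1 = 1")
      case True
      then have "w = v" using wform by (simp add: fun_eq_iff)
      then show ?thesis using nvw by simp
    next
      case False
      then have "\<alpha>1 = -1" using a1 by simp
      then show ?thesis using wform by (simp add: fun_eq_iff prod_eq_iff)
    qed
  qed
  show ?thesis using mem uniq by blast
qed

end
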